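(* Let $R$ be a commutative Noetherian domain, $I\subset R$ an ideal and $\mathfrak{p}\in\operatorname{Ass}^\infty(I)$. Then $(I^k:\mathfrak{p})=I(I^{k-1}:\mathfrak{p})$ for all $k\gg0$.
   Context: $\operatorname{Ass}^\infty(I)$ is the set of primes lying in $\operatorname{Ass}(I^k)$ for all $k\gg0$ (this set is well defined since $\operatorname{Ass}(I^k)$ is eventually constant). *)

theory Defs
  imports "HOL-Algebra.Ideal_Product" "HOL-Algebra.Ring_Divisibility"
begin

definition ideal_colon :: "('a, 'b) ring_scheme \<Rightarrow> 'a set \<Rightarrow> 'a set \<Rightarrow> 'a set" where
  "ideal_colon R J K = {r \<in> carrier R. \<forall>k \<in> K. r \<otimes>\<^bsub>R\<^esub> k \<in> J}"

fun ideal_pow :: "('a, 'b) ring_scheme \<Rightarrow> 'a set \<Rightarrow> nat \<Rightarrow> 'a set" where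
  "ideal_pow R I 0 = carrier R"
| "ideal_pow R I (Suc k) = ideal_prod R I (ideal_pow R I k)"

text \<open>Associated primes of R/J: primes of the form (J : x), x in R.\<close>
definition Ass :: "('a, 'b) ring_scheme \<Rightarrow> 'a set \<Rightarrow> 'a set set" where
  "Ass R J = {P. primeideal P R \<and> (\<exists>x \<in> carrier R. P = ideal_colon R J {x})}"

definition Ass_inf :: "('a, 'b) ring_scheme \<Rightarrow> 'a set \<Rightarrow> 'a set set" where
  "Ass_inf R I = {P. \<exists>k0. \<forall>k \<ge> k0. P \<in> Ass R (ideal_pow R I k)}"

end

theory Submission
  imports Defs "HOL-Library.List_Lexorder" "HOL-Library.Ramsey"
begin

definition upi :: "nat \<Rightarrow> nat list \<Rightarrow> nat list" where "upi i a = a[i := Suc (a!i)]"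
definition dni :: "nat \<Rightarrow> nat list \<Rightarrow> nat list" where "dni i a = a[i := a!i - 1]"
definition Mon :: "nat \<Rightarrow> nat \<Rightarrow> nat list set" where "Mon n k = {a. length a = n \<and> sum_list a = k}"

lemma length_up[simp]: "length (upi i a) = length a" by (simp add: upi_def)
lemma length_dn[simp]: "length (dni i a) = length a" by (simp add: dni_def)
lemma up_nth[simp]: "i < length a \<Longrightarrow> upi i a ! i = Suc (a ! i)" by (simp add: upi_def)
lemma dn_up[simp]: "dni i (upi i a) = a"
  by (cases "i < length a") (simp_all add: upi_def dni_def list_update_beyond)
lemma upi_inj: "upi i a = upi i b \<Longrightarrow> a = b" by (metis dn_up)
lemma up_dn[simp]: "0 < a!i \<Longrightarrow> upi i (dni i a) = a"
  by (cases "i < length a") (simp_all add: upi_def dni_def list_update_beyond)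
lemma sum_list_up: "i < length a \<Longrightarrow> sum_list (upi i a) = Suc (sum_list a)"
  by (simp add: upi_def sum_list_update)
lemma sum_list_dn: "i < length a \<Longrightarrow> 0 < a!i \<Longrightarrow> sum_list (dni i a) = sum_list a - 1"
  using sum_list_up[of i "dni i a"] by simp

lemma up_Mon: "a \<in> Mon n k \<Longrightarrow> i < n \<Longrightarrow> upi i a \<in> Mon n (Suc k)"
  by (simp add: Mon_def sum_list_up)
lemma dn_Mon: "a \<in> Mon n (Suc k) \<Longrightarrow> i < n \<Longrightarrow> 0 < a!i \<Longrightarrow> dni i a \<in> Mon n k"
  by (simp add: Mon_def sum_list_dn)

lemma finite_Mon: "finite (Mon n k)"
proof (rule finite_subset)
  show "Mon n k \<subseteq> {xs. set xs \<subseteq> {0..k} \<and> length xs = n}"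
    by (auto simp: Mon_def member_le_sum_list)
  show "finite {xs. set xs \<subseteq> {0..k::nat} \<and> length xs = n}"
    by (rule finite_lists_length_eq) simp
qed

lemma up_less_mono: "length a = length b \<Longrightarrow> i < length a \<Longrightarrow> a < b \<Longrightarrow> upi i a < upi i b"
proof (induction a arbitrary: b i)
  case Nil then show ?case by simp
next
  case (Cons x xs)
  then obtain y ys where b: "b = y # ys" by (cases b) auto
  show ?case
  proof (cases i)
    case 0 then show ?thesis using Cons b by (auto simp: upi_def)
  next
    case (Suc j)
    have "upi i (x#xs) = x # upi j xs" "upi i b = y # upi j ys" using Suc b by (simp_all add: upi_def)
    then show ?thesis using Cons b Suc by auto
  qed
qed

lemma up_le_mono: "length a = length b \<Longrightarrow> i < length a \<Longrightarrow> a \<le> b \<Longrightarrow> upi i a \<le> upi i b"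
  using up_less_mono by (metis order.order_iff_strict)

lemma up_less_cancel: "length a = length b \<Longrightarrow> i < length a \<Longrightarrow> upi i a < upi i b \<Longrightarrow> a < b"
  using up_le_mono by (metis leD leI)


lemma no_inf_desc:
  fixes h :: "nat \<Rightarrow> nat"
  assumes Y: "infinite Y" and dec: "\<forall>i\<in>Y. \<forall>j\<in>Y. i < j \<longrightarrow> h j < h i"
  shows False
proof -
  obtain y0 where y0: "y0 \<in> Y" using Y by (metis finite.emptyI ex_in_conv)
  let ?Z = "{j\<in>Y. y0 < j}"
  have "?Z = Y - {..y0}" by auto
  then have inf: "infinite ?Z" using Y by simp
  have "inj_on h ?Z" using dec unfolding inj_on_def by (metis (mono_tags, lifting) mem_Collect_eq linorder_neqE_nat less_irrefl)
  moreover have "h ` ?Z \<subseteq> {..<h y0}" using dec y0 by auto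
  ultimately have "finite ?Z" by (rule inj_on_finite) simp
  then show False using inf by simp
qed

lemma dickson_aux:
  fixes s :: "nat \<Rightarrow> nat list"
  shows "\<exists>Y. infinite Y \<and> (\<forall>i\<in>Y. \<forall>j\<in>Y. i < j \<longrightarrow> (\<forall>c<m. s i!c \<le> s j!c))"
proof (induction m)
  case 0 then show ?case by (intro exI[of _ UNIV]) simp
next
  case (Suc m)
  then obtain Y where Y: "infinite Y" "\<forall>i\<in>Y. \<forall>j\<in>Y. i < j \<longrightarrow> (\<forall>c<m. s i!c \<le> s j!c)" by blast
  define f where "f X = (if s (Min X) ! m \<le> s (Max X) ! m then 1 else (0::nat))" for X
  have "\<exists>Y' t. Y' \<subseteq> Y \<and> infinite Y' \<and> t < 2 \<and> (\<forall>x\<in>Y'. \<forall>y\<in>Y'. x \<noteq> y \<longrightarrow> f {x, y} = t)"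
    by (rule Ramsey2) (use Y in \<open>simp_all add: f_def\<close>)
  then obtain Y' t where Y': "Y' \<subseteq> Y" "infinite Y'" "t < 2" "\<forall>x\<in>Y'. \<forall>y\<in>Y'. x \<noteq> y \<longrightarrow> f {x, y} = t"
    by blast
  have fxy: "f {x, y} = (if s x ! m \<le> s y ! m then 1 else 0)" if "x < y" for x y
    using that by (simp add: f_def min_def max_def)
  show ?case
  proof (cases "t = 0")
    case True
    have "\<forall>i\<in>Y'. \<forall>j\<in>Y'. i < j \<longrightarrow> s j ! m < s i ! m"
    proof (intro ballI impI)
      fix i j assume "i \<in> Y'" "j \<in> Y'" "i < j"
      have "f {i, j} = t" using Y'(4)[rule_format, OF \<open>i \<in> Y'\<close> \<open>j \<in> Y'\<close>] \<open>i < j\<close> by simp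
      then have "f {i, j} = 0" using True by simp
      moreover have "f {i, j} = (if s i ! m \<le> s j ! m then 1 else 0)" by (rule fxy[OF \<open>i < j\<close>])
      ultimately have "\<not> s i ! m \<le> s j ! m" by (cases "s i ! m \<le> s j ! m") simp_all
      then show "s j ! m < s i ! m" by simp
    qed
    then have False using no_inf_desc[OF Y'(2), of "\<lambda>i. s i ! m"] by blast
    then show ?thesis ..
  next
    case False
    then have t: "t = 1" using Y'(3) by simp
    show ?thesis
    proof (intro exI[of _ Y'] conjI ballI impI allI)
      show "infinite Y'" by (rule Y'(2))
      fix i j c assume ij: "i \<in> Y'" "j \<in> Y'" "i < j" "c < Suc m"
      show "s i ! c \<le> s j ! c"
      proof (cases "c = m")
        case True
        have "f {i, j} = t" using Y'(4)[rule_format, OF ij(1) ij(2)] ij(3) by simp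
        then have "f {i, j} = 1" using t by simp
        moreover have "f {i, j} = (if s i ! m \<le> s j ! m then 1 else 0)" by (rule fxy[OF \<open>i < j\<close>])
        ultimately show ?thesis using True by (cases "s i ! m \<le> s j ! m") simp_all
      next
        case False
        then have "c < m" using ij by simp
        then show ?thesis using Y(2) Y'(1) ij by blast
      qed
    qed
  qed
qed

definition mon :: "('a,'b) ring_scheme \<Rightarrow> 'a list \<Rightarrow> nat list \<Rightarrow> 'a" where
  "mon R fs a = finprod R (\<lambda>i. fs!i [^]\<^bsub>R\<^esub> (a!i)) {..<length fs}"
definition ev :: "('a,'b) ring_scheme \<Rightarrow> 'a list \<Rightarrow> nat \<Rightarrow> (nat list \<Rightarrow> 'a) \<Rightarrow> 'a" where
  "ev R fs k c = finsum R (\<lambda>a. c a \<otimes>\<^bsub>R\<^esub> mon R fs a) (Mon (length fs) k)"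
definition shift :: "('a,'b) ring_scheme \<Rightarrow> nat \<Rightarrow> (nat list \<Rightarrow> 'a) \<Rightarrow> nat list \<Rightarrow> 'a" where
  "shift R i c = (\<lambda>g. if 0 < g!i then c (dni i g) else \<zero>\<^bsub>R\<^esub>)"

context cring
begin

lemma ideal_by_closure:
  assumes S: "S \<subseteq> carrier R" "\<zero> \<in> S" "\<And>x y. x\<in>S \<Longrightarrow> y\<in>S \<Longrightarrow> x \<oplus> y \<in> S"
    "\<And>x. x\<in>S \<Longrightarrow> \<ominus> x \<in> S"
    "\<And>r x. r \<in> carrier R \<Longrightarrow> x \<in> S \<Longrightarrow> r \<otimes> x \<in> S"
  shows "ideal S R"
proof (rule idealI)
  show "ring R" by (rule ring_axioms)
  show "subgroup S (add_monoid R)"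
    using S by (auto intro!: subgroup.intro simp: a_inv_def[symmetric])
  show "\<And>a x. a \<in> S \<Longrightarrow> x \<in> carrier R \<Longrightarrow> x \<otimes> a \<in> S" using S by blast
  show "\<And>a x. a \<in> S \<Longrightarrow> x \<in> carrier R \<Longrightarrow> a \<otimes> x \<in> S" using S
    by (metis m_comm subsetD)
qed

end

locale gens = cring R for R (structure) + fixes fs :: "'a list"
  assumes fs_carr: "set fs \<subseteq> carrier R"
begin

abbreviation "n \<equiv> length fs"

lemma fs_i: "i < n \<Longrightarrow> fs!i \<in> carrier R" using fs_carr by auto

lemma cf_app: "c \<in> UNIV \<rightarrow> carrier R \<Longrightarrow> c x \<in> carrier R" by auto

lemma mon_closed[simp]: "mon R fs a \<in> carrier R"
  unfolding mon_def using fs_i by (auto intro!: finprod_closed)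

lemma mon_up: assumes "i < n" "length a = n" shows "mon R fs (upi i a) = fs!i \<otimes> mon R fs a"
proof -
  have True: "i < length a" using assms by simp
  have "mon R fs (upi i a) = (\<Otimes>j\<in>{..<n}. (fs!j [^] (a!j)) \<otimes> (if j = i then fs!j else \<one>))"
    unfolding mon_def
  proof (rule finprod_cong')
    fix j assume j: "j \<in> {..<n}"
    show "fs ! j [^] (upi i a ! j) = fs ! j [^] a ! j \<otimes> (if j = i then fs ! j else \<one>)"
      using j True fs_i[of j] by (auto simp: upi_def nth_list_update)
  qed (use fs_i in auto)
  also have "\<dots> = mon R fs a \<otimes> (\<Otimes>j\<in>{..<n}. (if j = i then fs!j else \<one>))"
    unfolding mon_def by (subst finprod_multf) (use fs_i in auto)
  also have "(\<Otimes>j\<in>{..<n}. (if j = i then fs!j else \<one>)) = fs!i"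
    using finprod_singleton_swap[of i "{..<n}" "\<lambda>j. fs!j"] assms fs_i by auto
  finally show ?thesis using assms fs_i m_comm by auto
qed


lemma ev_closed[simp]: "c \<in> UNIV \<rightarrow> carrier R \<Longrightarrow> ev R fs k c \<in> carrier R"
  unfolding ev_def by (rule finsum_closed) (auto dest: cf_app)

lemma ev_add: assumes c: "c \<in> UNIV \<rightarrow> carrier R" and d: "d \<in> UNIV \<rightarrow> carrier R"
  shows "ev R fs k (\<lambda>g. c g \<oplus> d g) = ev R fs k c \<oplus> ev R fs k d"
proof -
  have "ev R fs k (\<lambda>g. c g \<oplus> d g) = (\<Oplus>g\<in>Mon n k. c g \<otimes> mon R fs g \<oplus> d g \<otimes> mon R fs g)"
    unfolding ev_def by (rule finsum_cong') (simp_all add: cf_app[OF c] cf_app[OF d] l_distr)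
  also have "\<dots> = ev R fs k c \<oplus> ev R fs k d"
    unfolding ev_def by (rule finsum_addf) (simp_all add: cf_app[OF c] cf_app[OF d] Pi_def)
  finally show ?thesis .
qed

lemma ev_smult: assumes c: "c \<in> UNIV \<rightarrow> carrier R" and r: "r \<in> carrier R"
  shows "ev R fs k (\<lambda>g. r \<otimes> c g) = r \<otimes> ev R fs k c"
proof -
  have "ev R fs k (\<lambda>g. r \<otimes> c g) = (\<Oplus>g\<in>Mon n k. r \<otimes> (c g \<otimes> mon R fs g))"
    unfolding ev_def by (rule finsum_cong') (simp_all add: cf_app[OF c] r m_assoc)
  also have "\<dots> = r \<otimes> ev R fs k c"
    unfolding ev_def by (rule finsum_rdistr[symmetric]) (simp_all add: cf_app[OF c] r Pi_def finite_Mon)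
  finally show ?thesis .
qed

lemma ev_zero: "ev R fs k (\<lambda>g. \<zero>) = \<zero>"
  unfolding ev_def by (rule add.finprod_one_eqI) simp

lemma ev_neg: assumes c: "c \<in> UNIV \<rightarrow> carrier R"
  shows "ev R fs k (\<lambda>g. \<ominus> c g) = \<ominus> ev R fs k c"
proof -
  have "ev R fs k (\<lambda>g. \<ominus> c g) = ev R fs k (\<lambda>g. (\<ominus> \<one>) \<otimes> c g)"
    unfolding ev_def by (rule finsum_cong') (simp_all add: cf_app[OF c] l_minus)
  also have "\<dots> = (\<ominus> \<one>) \<otimes> ev R fs k c" by (rule ev_smult) (simp_all add: c)
  also have "\<dots> = \<ominus> ev R fs k c" by (simp add: c l_minus)
  finally show ?thesis .
qed

lemma ev_sum: "finite J \<Longrightarrow> (\<And>j. j \<in> J \<Longrightarrow> d j \<in> UNIV \<rightarrow> carrier R) \<Longrightarrow>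
   ev R fs k (\<lambda>g. \<Oplus>j\<in>J. d j g) = (\<Oplus>j\<in>J. ev R fs k (d j))"
proof (induction J rule: finite_induct)
  case empty then show ?case by (simp add: ev_zero)
next
  case (insert x F)
  have dF: "(\<lambda>g. \<Oplus>j\<in>F. d j g) \<in> UNIV \<rightarrow> carrier R"
    using insert.prems by (auto intro!: finsum_closed)
  have dx: "d x \<in> UNIV \<rightarrow> carrier R" using insert.prems by simp
  have "ev R fs k (\<lambda>g. \<Oplus>j\<in>insert x F. d j g) = ev R fs k (\<lambda>g. d x g \<oplus> (\<Oplus>j\<in>F. d j g))"
  proof -
    have "(\<lambda>g. \<Oplus>j\<in>insert x F. d j g) = (\<lambda>g. d x g \<oplus> (\<Oplus>j\<in>F. d j g))"
    proof
      fix g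
      have "(\<lambda>j. d j g) \<in> F \<rightarrow> carrier R" using insert.prems by auto
      moreover have "d x g \<in> carrier R" using dx by (rule cf_app)
      ultimately show "(\<Oplus>j\<in>insert x F. d j g) = d x g \<oplus> (\<Oplus>j\<in>F. d j g)"
        using insert.hyps by (simp add: finsum_insert)
    qed
    then show ?thesis by simp
  qed
  also have "\<dots> = ev R fs k (d x) \<oplus> ev R fs k (\<lambda>g. \<Oplus>j\<in>F. d j g)"
    by (rule ev_add[OF dx dF])
  also have "\<dots> = ev R fs k (d x) \<oplus> (\<Oplus>j\<in>F. ev R fs k (d j))"
    using insert.IH insert.prems by (metis insertCI)
  also have "\<dots> = (\<Oplus>j\<in>insert x F. ev R fs k (d j))"
    by (rule finsum_insert[symmetric]) (use insert.hyps insert.prems in \<open>auto intro!: ev_closed\<close>)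
  finally show ?case .
qed

lemma shift_closed[simp]: "c \<in> UNIV \<rightarrow> carrier R \<Longrightarrow> shift R i c \<in> UNIV \<rightarrow> carrier R"
  unfolding shift_def by auto

lemma ev_shift: assumes c: "c \<in> UNIV \<rightarrow> carrier R" and i: "i < n"
  shows "ev R fs (Suc k) (shift R i c) = fs!i \<otimes> ev R fs k c"
proof -
  let ?M = "Mon n (Suc k)"
  let ?A = "{g \<in> ?M. 0 < g!i}"
  have "ev R fs (Suc k) (shift R i c) = (\<Oplus>g\<in>?A. shift R i c g \<otimes> mon R fs g)"
    unfolding ev_def
    by (rule add.finprod_mono_neutral_cong_right) (use cf_app[OF c] in \<open>auto simp: finite_Mon shift_def\<close>)
  also have "?A = upi i ` Mon n k"
  proof
    show "?A \<subseteq> upi i ` Mon n k"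
    proof
      fix g assume g: "g \<in> ?A"
      then have "g = upi i (dni i g)" by simp
      moreover have "dni i g \<in> Mon n k" using g i dn_Mon by auto
      ultimately show "g \<in> upi i ` Mon n k" by blast
    qed
    show "upi i ` Mon n k \<subseteq> ?A" using i up_Mon by (auto simp: Mon_def)
  qed
  also have "(\<Oplus>g\<in>upi i ` Mon n k. shift R i c g \<otimes> mon R fs g)
       = (\<Oplus>a\<in>Mon n k. shift R i c (upi i a) \<otimes> mon R fs (upi i a))"
    by (rule add.finprod_reindex) (use cf_app[OF c] in \<open>auto simp: shift_def inj_on_def intro: upi_inj\<close>)
  also have "\<dots> = (\<Oplus>a\<in>Mon n k. fs!i \<otimes> (c a \<otimes> mon R fs a))"
  proof (rule finsum_cong')
    fix a assume a: "a \<in> Mon n k"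
    then have "length a = n" by (simp add: Mon_def)
    then show "shift R i c (upi i a) \<otimes> mon R fs (upi i a) = fs!i \<otimes> (c a \<otimes> mon R fs a)"
      using i cf_app[OF c] fs_i[OF i] by (simp add: shift_def mon_up m_lcomm)
  qed (use cf_app[OF c] fs_i[OF i] in auto)
  also have "\<dots> = fs!i \<otimes> ev R fs k c"
    unfolding ev_def by (subst finsum_rdistr) (use cf_app[OF c] fs_i[OF i] in \<open>auto simp: finite_Mon\<close>)
  finally show ?thesis .
qed


definition "Ev k = {y. \<exists>c\<in>UNIV\<rightarrow>carrier R. ev R fs k c = y}"

lemma Ev_ideal: "ideal (Ev k) R"
proof (rule ideal_by_closure)
  show "Ev k \<subseteq> carrier R" unfolding Ev_def by auto
  show "\<zero> \<in> Ev k" unfolding Ev_def using ev_zero[of k] by (intro CollectI bexI[of _ "\<lambda>g. \<zero>"]) auto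
  fix x y assume x: "x \<in> Ev k" and y: "y \<in> Ev k"
  then obtain c d where c: "c \<in> UNIV\<rightarrow>carrier R" "ev R fs k c = x" and d: "d \<in> UNIV\<rightarrow>carrier R" "ev R fs k d = y"
    unfolding Ev_def by auto
  show "x \<oplus> y \<in> Ev k" unfolding Ev_def using ev_add[OF c(1) d(1), of k] c d
    by (intro CollectI bexI[of _ "\<lambda>g. c g \<oplus> d g"]) (auto dest: cf_app)
next
  fix x assume x: "x \<in> Ev k"
  then obtain c where c: "c \<in> UNIV\<rightarrow>carrier R" "ev R fs k c = x" unfolding Ev_def by auto
  show "\<ominus> x \<in> Ev k" unfolding Ev_def using ev_neg[OF c(1), of k] c
    by (intro CollectI bexI[of _ "\<lambda>g. \<ominus> c g"]) (auto dest: cf_app)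
next
  fix r x assume r: "r \<in> carrier R" and x: "x \<in> Ev k"
  then obtain c where c: "c \<in> UNIV\<rightarrow>carrier R" "ev R fs k c = x" unfolding Ev_def by auto
  show "r \<otimes> x \<in> Ev k" unfolding Ev_def using ev_smult[OF c(1) r, of k] c r
    by (intro CollectI bexI[of _ "\<lambda>g. r \<otimes> c g"]) (auto dest: cf_app)
qed

lemma Mon_0: "Mon n 0 = {replicate n 0}"
  by (auto simp: Mon_def intro: replicate_eqI)

lemma mon_0: "mon R fs (replicate n 0) = \<one>"
  unfolding mon_def by (rule finprod_one_eqI) simp

lemma Ev_0: "Ev 0 = carrier R"
proof
  show "Ev 0 \<subseteq> carrier R" unfolding Ev_def by auto
  show "carrier R \<subseteq> Ev 0"
  proof
    fix y assume y: "y \<in> carrier R"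
    have "ev R fs 0 (\<lambda>g. y) = y" unfolding ev_def Mon_0 using y by (simp add: mon_0)
    then show "y \<in> Ev 0" unfolding Ev_def using y by auto
  qed
qed

lemma shift_Ev: "i < n \<Longrightarrow> y \<in> Ev k \<Longrightarrow> fs!i \<otimes> y \<in> Ev (Suc k)"
  unfolding Ev_def using ev_shift shift_closed by blast

lemma Idl_mult_Ev: assumes y: "y \<in> Ev k" and x: "x \<in> Idl (set fs)"
  shows "x \<otimes> y \<in> Ev (Suc k)"
proof -
  interpret E: ideal "Ev (Suc k)" R by (rule Ev_ideal)
  have yc: "y \<in> carrier R" using y unfolding Ev_def by auto
  let ?T = "{x \<in> carrier R. x \<otimes> y \<in> Ev (Suc k)}"
  have "ideal ?T R"
  proof (rule ideal_by_closure)
    show "?T \<subseteq> carrier R" by auto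
    show "\<zero> \<in> ?T" using yc by simp
    show "\<And>a b. a \<in> ?T \<Longrightarrow> b \<in> ?T \<Longrightarrow> a \<oplus> b \<in> ?T"
      using yc by (auto simp: l_distr)
    show "\<And>a. a \<in> ?T \<Longrightarrow> \<ominus> a \<in> ?T"
      using yc by (auto simp: l_minus E.a_inv_closed)
    show "\<And>r a. r \<in> carrier R \<Longrightarrow> a \<in> ?T \<Longrightarrow> r \<otimes> a \<in> ?T"
      using yc by (auto simp: m_assoc E.I_l_closed)
  qed
  moreover have "set fs \<subseteq> ?T"
  proof
    fix f assume "f \<in> set fs"
    then obtain i where "i < n" "f = fs!i" by (auto simp: in_set_conv_nth)
    then show "f \<in> ?T" using shift_Ev[OF _ y] fs_i by auto
  qed
  ultimately have "Idl (set fs) \<subseteq> ?T" by (rule genideal_minimal)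
  then show ?thesis using x by auto
qed

lemma pow_sub_Ev: "ideal_pow R (Idl (set fs)) k \<subseteq> Ev k"
proof (induction k)
  case 0 then show ?case by (simp add: Ev_0)
next
  case (Suc k)
  interpret E: ideal "Ev (Suc k)" R by (rule Ev_ideal)
  show ?case
  proof
    fix z assume "z \<in> ideal_pow R (Idl (set fs)) (Suc k)"
    then have "z \<in> ideal_prod R (Idl (set fs)) (ideal_pow R (Idl (set fs)) k)" by simp
    then show "z \<in> Ev (Suc k)"
    proof (induction z rule: ideal_prod.induct)
      case (prod i j) then show ?case using Suc.IH Idl_mult_Ev by blast
    next
      case (sum s1 s2) then show ?case by (simp add: E.a_closed)
    qed
  qed
qed

end

definition le_pw :: "nat list \<Rightarrow> nat list \<Rightarrow> bool" where
  "le_pw a b \<longleftrightarrow> length a = length b \<and> (\<forall>i<length a. a!i \<le> b!i)"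

locale rees = gens +
  fixes N :: "nat \<Rightarrow> 'a set"
  assumes N_ideal: "ideal (N k) R"
    and N_step: "ideal_prod R (Idl (set fs)) (N k) \<subseteq> N (Suc k)"
    and N_sub: "N k \<subseteq> ideal_pow R (Idl (set fs)) k"
begin

definition "M k = {c \<in> UNIV \<rightarrow> carrier R. ev R fs k c \<in> N k}"
definition "L b = {c b | c. c \<in> M (sum_list b) \<and> (\<forall>g\<in>Mon n (sum_list b). b < g \<longrightarrow> c g = \<zero>)}"

lemma fs_Idl: "i < n \<Longrightarrow> fs!i \<in> Idl (set fs)"
  using genideal_self[OF fs_carr] by auto

lemma shift_M: assumes c: "c \<in> M k" and i: "i < n" shows "shift R i c \<in> M (Suc k)"
proof -
  have c1: "c \<in> UNIV \<rightarrow> carrier R" and c2: "ev R fs k c \<in> N k" using c by (auto simp: M_def)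
  have "ev R fs (Suc k) (shift R i c) = fs!i \<otimes> ev R fs k c" using ev_shift[OF c1 i] .
  also have "\<dots> \<in> ideal_prod R (Idl (set fs)) (N k)" using fs_Idl[OF i] c2 by (rule ideal_prod.prod)
  finally show ?thesis using N_step c1 by (auto simp: M_def)
qed

lemma L_ideal: "ideal (L b) R"
proof (rule ideal_by_closure)
  show "L b \<subseteq> carrier R" unfolding L_def M_def by (auto dest: cf_app)
  show "\<zero> \<in> L b" unfolding L_def M_def
    using ev_zero additive_subgroup.zero_closed[OF ideal.axioms(1)[OF N_ideal]]
    by (intro CollectI exI[of _ "\<lambda>g. \<zero>"]) auto
next
  fix x y assume "x \<in> L b" "y \<in> L b"
  then obtain c d where c: "c \<in> M (sum_list b)" "\<forall>g\<in>Mon n (sum_list b). b < g \<longrightarrow> c g = \<zero>" "x = c b"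
    and d: "d \<in> M (sum_list b)" "\<forall>g\<in>Mon n (sum_list b). b < g \<longrightarrow> d g = \<zero>" "y = d b"
    unfolding L_def by blast
  have c1: "c \<in> UNIV \<rightarrow> carrier R" and d1: "d \<in> UNIV \<rightarrow> carrier R" using c d by (auto simp: M_def)
  have "(\<lambda>g. c g \<oplus> d g) \<in> M (sum_list b)"
    using c d ev_add[OF c1 d1] additive_subgroup.a_closed[OF ideal.axioms(1)[OF N_ideal]] by (auto simp: M_def dest: cf_app)
  then show "x \<oplus> y \<in> L b" unfolding L_def using c d
    by (intro CollectI exI[of _ "\<lambda>g. c g \<oplus> d g"]) auto
next
  fix x assume "x \<in> L b"
  then obtain c where c: "c \<in> M (sum_list b)" "\<forall>g\<in>Mon n (sum_list b). b < g \<longrightarrow> c g = \<zero>" "x = c b"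
    unfolding L_def by blast
  have c1: "c \<in> UNIV \<rightarrow> carrier R" using c by (auto simp: M_def)
  have "(\<lambda>g. \<ominus> c g) \<in> M (sum_list b)"
    using c ev_neg[OF c1] additive_subgroup.a_inv_closed[OF ideal.axioms(1)[OF N_ideal]]
    by (auto simp: M_def dest: cf_app)
  then show "\<ominus> x \<in> L b" unfolding L_def using c
    by (intro CollectI exI[of _ "\<lambda>g. \<ominus> c g"]) auto
next
  fix r x assume r: "r \<in> carrier R" and "x \<in> L b"
  then obtain c where c: "c \<in> M (sum_list b)" "\<forall>g\<in>Mon n (sum_list b). b < g \<longrightarrow> c g = \<zero>" "x = c b"
    unfolding L_def by blast
  have c1: "c \<in> UNIV \<rightarrow> carrier R" using c by (auto simp: M_def)
  have "(\<lambda>g. r \<otimes> c g) \<in> M (sum_list b)"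
    using c ev_smult[OF c1 r] ideal.I_l_closed[OF N_ideal] r by (auto simp: M_def dest: cf_app)
  then show "r \<otimes> x \<in> L b" unfolding L_def using c r
    by (intro CollectI exI[of _ "\<lambda>g. r \<otimes> c g"]) (auto dest: cf_app)
qed

lemma L_up: assumes b: "length b = n" and i: "i < n" shows "L b \<subseteq> L (upi i b)"
proof
  fix x assume "x \<in> L b"
  then obtain c where c: "c \<in> M (sum_list b)" "\<forall>g\<in>Mon n (sum_list b). b < g \<longrightarrow> c g = \<zero>" "x = c b"
    unfolding L_def by blast
  have su: "sum_list (upi i b) = Suc (sum_list b)" using b i by (simp add: sum_list_up)
  have "shift R i c \<in> M (sum_list (upi i b))" using shift_M[OF c(1) i] su by simp
  moreover have "shift R i c (upi i b) = x" using c b i by (simp add: shift_def)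
  moreover have "\<forall>g\<in>Mon n (sum_list (upi i b)). upi i b < g \<longrightarrow> shift R i c g = \<zero>"
  proof (intro ballI impI)
    fix g assume g: "g \<in> Mon n (sum_list (upi i b))" and lt: "upi i b < g"
    show "shift R i c g = \<zero>"
    proof (cases "0 < g!i")
      case True
      have gm: "dni i g \<in> Mon n (sum_list b)" using dn_Mon[of g n "sum_list b" i] g su i True by simp
      have "upi i b < upi i (dni i g)" using lt True by simp
      then have "b < dni i g" using up_less_cancel[of b "dni i g" i] b i gm by (simp add: Mon_def)
      then show ?thesis using c(2) gm True by (simp add: shift_def)
    qed (simp add: shift_def)
  qed
  ultimately show "x \<in> L (upi i b)" unfolding L_def by blast
qed

lemma L_mono_aux: "length a = n \<Longrightarrow> le_pw a b \<Longrightarrow> (\<Sum>j<n. b!j - a!j) = d \<Longrightarrow> L a \<subseteq> L b"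
proof (induction d arbitrary: a rule: less_induct)
  case (less d)
  show ?case
  proof (cases "a = b")
    case True then show ?thesis by simp
  next
    case False
    have lb: "length b = n" using less.prems by (simp add: le_pw_def)
    obtain i where i: "i < n" "a!i < b!i"
    proof -
      have "\<not> (\<forall>i<n. a!i = b!i)" using False lb less.prems(1) nth_equalityI by metis
      then show ?thesis using that less.prems by (force simp: le_pw_def)
    qed
    have le2: "le_pw (upi i a) b" using less.prems i
      by (auto simp: le_pw_def upi_def nth_list_update)
    have "(\<Sum>j<n. b!j - upi i a!j) < (\<Sum>j<n. b!j - a!j)"
    proof (rule sum_strict_mono_ex1)
      show "\<forall>x\<in>{..<n}. b ! x - upi i a ! x \<le> b ! x - a ! x"
      proof
        fix x assume "x \<in> {..<n}"
        then show "b ! x - upi i a ! x \<le> b ! x - a ! x"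
          using less.prems by (cases "x = i") (auto simp: upi_def)
      qed
      show "\<exists>x\<in>{..<n}. b ! x - upi i a ! x < b ! x - a ! x"
        using i less.prems by (intro bexI[of _ i]) (auto simp: upi_def)
    qed simp
    then have "L (upi i a) \<subseteq> L b" using less.IH less.prems le2 by simp
    moreover have "L a \<subseteq> L (upi i a)" using L_up less.prems i by simp
    ultimately show ?thesis by simp
  qed
qed

lemma L_mono: "length a = n \<Longrightarrow> le_pw a b \<Longrightarrow> L a \<subseteq> L b"
  using L_mono_aux by blast


definition "J b = {i. i < n \<and> 0 < b!i}"
definition "S b = {finsum R r (J b) | r. \<forall>i\<in>J b. r i \<in> L (dni i b)}"
definition "bad b \<longleftrightarrow> length b = n \<and> \<not> L b \<subseteq> S b"

lemma L_carr: "L b \<subseteq> carrier R" using ideal.Icarr[OF L_ideal] by blast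

lemma L_below: assumes a: "length a = n" and b: "length b = n" and le: "le_pw a b" and ne: "a \<noteq> b"
  shows "L a \<subseteq> S b"
proof
  fix x assume x: "x \<in> L a"
  obtain i where i: "i < n" "a!i < b!i"
  proof -
    have "\<not> (\<forall>i<n. a!i = b!i)" using ne a b nth_equalityI by metis
    then show ?thesis using that le a by (force simp: le_pw_def)
  qed
  have le2: "le_pw a (dni i b)"
    unfolding le_pw_def
  proof (intro conjI allI impI)
    show "length a = length (dni i b)" using a b by simp
    fix j assume "j < length a"
    then show "a ! j \<le> dni i b ! j" using le i a b by (cases "j = i") (auto simp: le_pw_def dni_def)
  qed
  have xL: "x \<in> L (dni i b)" using L_mono[OF a le2] x by blast
  have iJ: "i \<in> J b" using i by (simp add: J_def)
  define r where "r j = (if j = i then x else \<zero>)" for j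
  have "\<forall>j\<in>J b. r j \<in> L (dni j b)"
    using xL additive_subgroup.zero_closed[OF ideal.axioms(1)[OF L_ideal]] by (simp add: r_def)
  moreover have "finsum R r (J b) = x"
  proof -
    have fin: "finite (J b)" unfolding J_def by simp
    have xc: "x \<in> carrier R" using xL L_carr by blast
    have "(\<Oplus>j\<in>J b. if j = i then x else \<zero>) = x"
      using add.finprod_singleton_swap[of i "J b" "\<lambda>_. x"] iJ fin xc by simp
    then show ?thesis unfolding r_def .
  qed
  ultimately have "x = finsum R r (J b) \<and> (\<forall>j\<in>J b. r j \<in> L (dni j b))" by simp
  then show "x \<in> S b" unfolding S_def by fast
qed

end

locale rees_noeth = rees + noetherian_ring R
begin

lemma acc_seq: fixes Y :: "nat set" and X :: "nat \<Rightarrow> 'a set"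
  assumes Y: "infinite Y" and mono: "\<forall>i\<in>Y. \<forall>j\<in>Y. i < j \<longrightarrow> X i \<subseteq> X j"
  and idl: "\<And>i. ideal (X i) R"
  shows "\<exists>i\<in>Y. \<exists>j\<in>Y. i < j \<and> X j \<subseteq> X i"
proof -
  let ?C = "X ` Y"
  have ne: "?C \<noteq> {}" using Y by (metis finite.emptyI image_is_empty)
  have comp: "\<forall>A\<in>?C. \<forall>B\<in>?C. A \<subseteq> B \<or> B \<subseteq> A"
  proof (intro ballI)
    fix A B assume "A \<in> ?C" "B \<in> ?C"
    then obtain i j where "i \<in> Y" "j \<in> Y" "A = X i" "B = X j" by blast
    then show "A \<subseteq> B \<or> B \<subseteq> A" using mono
      by (cases i j rule: linorder_cases) auto
  qed
  have ch: "subset.chain {I. ideal I R} ?C"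
  proof -
    have "?C \<subseteq> {I. ideal I R}" using idl by blast
    then show ?thesis using comp unfolding subset.chain_def by (metis psubset_eq sup2CI)
  qed
  have "\<Union>?C \<in> ?C" by (rule ideal_chain_is_trivial[OF ne ch])
  then obtain i where i: "i \<in> Y" "\<Union>?C = X i" by blast
  obtain j where j: "j \<in> Y" "i < j" using Y by (metis infinite_nat_iff_unbounded)
  have "X j \<subseteq> X i" using i j by blast
  then show ?thesis using i j by blast
qed

lemma finite_bad: "finite {b. bad b}"
proof (rule ccontr)
  assume "infinite {b. bad b}"
  then obtain s :: "nat \<Rightarrow> nat list" where s: "inj s" "range s \<subseteq> {b. bad b}"
    using infinite_countable_subset[OF \<open>infinite {b. bad b}\<close>] by auto
  obtain Y where Y: "infinite Y" "\<forall>i\<in>Y. \<forall>j\<in>Y. i < j \<longrightarrow> (\<forall>c<n. s i!c \<le> s j!c)"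
    using dickson_aux[of n s] by auto
  have len: "length (s i) = n" for i
  proof -
    have "bad (s i)" using s(2) by blast
    then show ?thesis by (simp add: bad_def)
  qed
  have le: "le_pw (s i) (s j)" if "i \<in> Y" "j \<in> Y" "i < j" for i j
    using Y(2) that len by (simp add: le_pw_def)
  have "\<exists>i\<in>Y. \<exists>j\<in>Y. i < j \<and> L (s j) \<subseteq> L (s i)"
  proof (rule acc_seq[OF Y(1)])
    show "\<forall>i\<in>Y. \<forall>j\<in>Y. i < j \<longrightarrow> L (s i) \<subseteq> L (s j)"
      using L_mono[OF len le] by blast
    show "\<And>i. ideal (L (s i)) R" by (rule L_ideal)
  qed
  then obtain i j where ij: "i \<in> Y" "j \<in> Y" "i < j" "L (s j) \<subseteq> L (s i)" by blast
  have "s i \<noteq> s j" using s(1) ij(3) by (metis inj_eq less_irrefl)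
  then have "L (s i) \<subseteq> S (s j)" by (rule L_below[OF len len le[OF ij(1-3)]])
  then have "\<not> bad (s j)" using ij(4) unfolding bad_def by blast
  moreover have "bad (s j)" using s(2) by blast
  ultimately show False by simp
qed


abbreviation "IN k \<equiv> ideal_prod R (Idl (set fs)) (N k)"
definition "rk k b = card {g \<in> Mon n (Suc k). g < b}"

lemma Idl_fs: "ideal (Idl (set fs)) R" by (rule genideal_ideal[OF fs_carr])
lemma IN_ideal: "ideal (IN k) R" by (rule ideal_prod_is_ideal[OF Idl_fs N_ideal])

lemma finsum_in_ideal: assumes "ideal A R" "finite F" "\<And>i. i \<in> F \<Longrightarrow> f i \<in> A"
  shows "finsum R f F \<in> A"
  using assms(2,3)
proof (induction F rule: finite_induct)
  case empty then show ?case using additive_subgroup.zero_closed[OF ideal.axioms(1)[OF assms(1)]] by simp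
next
  case (insert x F)
  have fc: "f \<in> F \<rightarrow> carrier R" using insert.prems ideal.Icarr[OF assms(1)] by blast
  have "f x \<in> carrier R" using insert.prems ideal.Icarr[OF assms(1)] by blast
  then have "finsum R f (insert x F) = f x \<oplus> finsum R f F" using insert.hyps fc by (simp add: finsum_insert)
  also have "\<dots> \<in> A" using insert additive_subgroup.a_closed[OF ideal.axioms(1)[OF assms(1)]] by simp
  finally show ?case .
qed

lemma ev_allzero: "(\<forall>g\<in>Mon n k. c g = \<zero>) \<Longrightarrow> ev R fs k c = \<zero>"
  unfolding ev_def by (rule add.finprod_one_eqI) simp

lemma reduce_H:
  assumes IH: "\<And>b c. b \<in> Mon n (Suc k) \<Longrightarrow> rk k b < m \<Longrightarrow> c \<in> M (Suc k) \<Longrightarrow>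
                 (\<forall>g\<in>Mon n (Suc k). b < g \<longrightarrow> c g = \<zero>) \<Longrightarrow> ev R fs (Suc k) c \<in> IN k"
    and c: "c \<in> M (Suc k)" and rkc: "\<forall>g\<in>Mon n (Suc k). c g \<noteq> \<zero> \<longrightarrow> rk k g < m"
  shows "ev R fs (Suc k) c \<in> IN k"
proof (cases "\<forall>g\<in>Mon n (Suc k). c g = \<zero>")
  case True
  then show ?thesis using ev_allzero additive_subgroup.zero_closed[OF ideal.axioms(1)[OF IN_ideal]] by simp
next
  case False
  let ?Z = "{g \<in> Mon n (Suc k). c g \<noteq> \<zero>}"
  have fin: "finite ?Z" using finite_Mon by simp
  have ne: "?Z \<noteq> {}" using False by blast
  define g0 where "g0 = Max ?Z"
  have g0: "g0 \<in> ?Z" unfolding g0_def using Max_in[OF fin ne] .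
  have above: "\<forall>g\<in>Mon n (Suc k). g0 < g \<longrightarrow> c g = \<zero>"
  proof (intro ballI impI)
    fix g assume g: "g \<in> Mon n (Suc k)" "g0 < g"
    show "c g = \<zero>"
    proof (rule ccontr)
      assume "c g \<noteq> \<zero>"
      then have "g \<in> ?Z" using g by simp
      then have "g \<le> g0" unfolding g0_def using Max_ge[OF fin] by blast
      then show False using g(2) by simp
    qed
  qed
  show ?thesis using IH[OF _ _ c above] g0 rkc by blast
qed

lemma reduce_step:
  assumes nobad: "\<forall>b\<in>Mon n (Suc k). \<not> bad b"
    and IH: "\<And>b' c. b' \<in> Mon n (Suc k) \<Longrightarrow> rk k b' < rk k b \<Longrightarrow> c \<in> M (Suc k) \<Longrightarrow>
                 (\<forall>g\<in>Mon n (Suc k). b' < g \<longrightarrow> c g = \<zero>) \<Longrightarrow> ev R fs (Suc k) c \<in> IN k"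
    and b: "b \<in> Mon n (Suc k)" and c: "c \<in> M (Suc k)"
    and cz: "\<forall>g\<in>Mon n (Suc k). b < g \<longrightarrow> c g = \<zero>"
  shows "ev R fs (Suc k) c \<in> IN k"
proof -
  have lb: "length b = n" and sb: "sum_list b = Suc k" using b by (auto simp: Mon_def)
  have c1: "c \<in> UNIV \<rightarrow> carrier R" using c by (simp add: M_def)
  have "c b \<in> L b" unfolding L_def using c cz sb by auto
  moreover have "\<not> bad b" using nobad b by blast
  ultimately have "c b \<in> S b" using lb by (auto simp: bad_def)
  then obtain r where r: "c b = finsum R r (J b)" "\<forall>i\<in>J b. r i \<in> L (dni i b)"
    unfolding S_def by blast
  have sdn: "sum_list (dni i b) = k" if "i \<in> J b" for i
    using that lb sb sum_list_dn[of i b] by (simp add: J_def)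
  have "\<forall>i\<in>J b. \<exists>d. d \<in> M k \<and> (\<forall>g\<in>Mon n k. dni i b < g \<longrightarrow> d g = \<zero>) \<and> d (dni i b) = r i"
  proof
    fix i assume i: "i \<in> J b"
    then have "r i \<in> L (dni i b)" using r by blast
    then show "\<exists>d. d \<in> M k \<and> (\<forall>g\<in>Mon n k. dni i b < g \<longrightarrow> d g = \<zero>) \<and> d (dni i b) = r i"
      unfolding L_def using sdn[OF i] by auto
  qed
  then obtain d where d: "\<And>i. i \<in> J b \<Longrightarrow> d i \<in> M k"
     "\<And>i. i \<in> J b \<Longrightarrow> \<forall>g\<in>Mon n k. dni i b < g \<longrightarrow> d i g = \<zero>"
     "\<And>i. i \<in> J b \<Longrightarrow> d i (dni i b) = r i"
    by metis
  have d1: "d i \<in> UNIV \<rightarrow> carrier R" if "i \<in> J b" for i using d(1)[OF that] by (simp add: M_def)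
  have finJ: "finite (J b)" by (simp add: J_def)
  have Jn: "i \<in> J b \<Longrightarrow> i < n" for i by (simp add: J_def)
  define e where "e g = (\<Oplus>i\<in>J b. shift R i (d i) g)" for g
  have e1: "e \<in> UNIV \<rightarrow> carrier R"
    unfolding e_def using shift_closed[OF d1] by (auto intro!: finsum_closed dest: cf_app)
  have eve: "ev R fs (Suc k) e = (\<Oplus>i\<in>J b. fs!i \<otimes> ev R fs k (d i))"
  proof -
    have "ev R fs (Suc k) e = (\<Oplus>i\<in>J b. ev R fs (Suc k) (shift R i (d i)))"
      unfolding e_def by (rule ev_sum[OF finJ shift_closed[OF d1]])
    also have "\<dots> = (\<Oplus>i\<in>J b. fs!i \<otimes> ev R fs k (d i))"
      by (rule finsum_cong') (use ev_shift[OF d1 Jn] d1 fs_i Jn in \<open>auto\<close>)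
    finally show ?thesis .
  qed
  have eIN: "ev R fs (Suc k) e \<in> IN k"
    unfolding eve
  proof (rule finsum_in_ideal[OF IN_ideal finJ])
    fix i assume i: "i \<in> J b"
    have "ev R fs k (d i) \<in> N k" using d(1)[OF i] by (simp add: M_def)
    then show "fs!i \<otimes> ev R fs k (d i) \<in> IN k" using fs_Idl[OF Jn[OF i]] by (rule ideal_prod.prod[rotated])
  qed
  define c' where "c' g = c g \<oplus> \<ominus> e g" for g
  have c'1: "c' \<in> UNIV \<rightarrow> carrier R" unfolding c'_def using c1 e1 by (auto dest: cf_app)
  have ne1: "(\<lambda>g. \<ominus> e g) \<in> UNIV \<rightarrow> carrier R" using e1 by (auto dest: cf_app)
  have evc': "ev R fs (Suc k) c' = ev R fs (Suc k) c \<oplus> \<ominus> ev R fs (Suc k) e"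
    unfolding c'_def using ev_add[OF c1 ne1] ev_neg[OF e1] by simp
  have "ev R fs (Suc k) e \<in> N (Suc k)" using eIN N_step by blast
  then have "ev R fs (Suc k) c' \<in> N (Suc k)" unfolding evc' using c
    additive_subgroup.a_closed[OF ideal.axioms(1)[OF N_ideal]]
    additive_subgroup.a_inv_closed[OF ideal.axioms(1)[OF N_ideal]] by (simp add: M_def)
  then have c'M: "c' \<in> M (Suc k)" using c'1 by (simp add: M_def)
  have shz: "shift R i (d i) g = \<zero>" if i: "i \<in> J b" and g: "g \<in> Mon n (Suc k)" "b < g" for i g
  proof (cases "0 < g!i")
    case True
    have gm: "dni i g \<in> Mon n k" using dn_Mon[OF g(1) Jn[OF i] True] .
    have bi: "0 < b!i" using i by (simp add: J_def)
    have "upi i (dni i b) < upi i (dni i g)" using g(2) True bi by simp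
    then have "dni i b < dni i g" using up_less_cancel[of "dni i b" "dni i g" i] lb gm Jn[OF i]
      by (simp add: Mon_def)
    then show ?thesis using d(2)[OF i] gm True by (simp add: shift_def)
  qed (simp add: shift_def)
  have c'z: "\<forall>g\<in>Mon n (Suc k). c' g \<noteq> \<zero> \<longrightarrow> rk k g < rk k b"
  proof (intro ballI impI)
    fix g assume g: "g \<in> Mon n (Suc k)" and nz: "c' g \<noteq> \<zero>"
    have "\<not> b \<le> g"
    proof
      assume "b \<le> g"
      then consider "b = g" | "b < g" by fastforce
      then show False
      proof cases
        case 1
        have "e b = finsum R r (J b)"
          unfolding e_def
        proof (rule finsum_cong')
          fix i assume i: "i \<in> J b"
          then show "shift R i (d i) b = r i" using d(3)[OF i] by (simp add: shift_def J_def)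
        qed (use r(2) L_carr in auto)
        then have "e b = c b" using r(1) by simp
        then have "c' b = \<zero>" unfolding c'_def using cf_app[OF c1, of b] by (simp add: r_neg)
        then show False using nz 1 by simp
      next
        case 2
        have "e g = \<zero>" unfolding e_def using shz[OF _ g 2] by (simp add: add.finprod_one_eqI)
        then have "c' g = \<zero>" unfolding c'_def using cz g 2 by simp
        then show False using nz by simp
      qed
    qed
    then have gb: "g < b" by simp
    have "{h \<in> Mon n (Suc k). h < g} \<subset> {h \<in> Mon n (Suc k). h < b}"
      using gb g by auto
    then show "rk k g < rk k b" unfolding rk_def by (rule psubset_card_mono[rotated]) (simp add: finite_Mon)
  qed
  have "ev R fs (Suc k) c' \<in> IN k" by (rule reduce_H[OF IH c'M c'z])
  moreover have "ev R fs (Suc k) c = ev R fs (Suc k) c' \<oplus> ev R fs (Suc k) e"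
  proof -
    have "(\<lambda>g. c' g \<oplus> e g) = c"
    proof
      fix g show "c' g \<oplus> e g = c g" unfolding c'_def using c1 e1
        by (simp add: cf_app a_assoc l_neg)
    qed
    then show ?thesis using ev_add[OF c'1 e1] by simp
  qed
  ultimately show ?thesis using eIN additive_subgroup.a_closed[OF ideal.axioms(1)[OF IN_ideal]] by simp
qed


lemma key: "\<exists>k0. \<forall>k\<ge>k0. N (Suc k) \<subseteq> IN k"
proof -
  have "finite (sum_list ` {b. bad b})" using finite_bad by simp
  then obtain D where D: "\<forall>x\<in>sum_list ` {b. bad b}. x < D"
    using finite_nat_set_iff_bounded by blast
  show ?thesis
  proof (intro exI[of _ D] allI impI)
    fix k assume kD: "D \<le> k"
    have nobad: "\<forall>b\<in>Mon n (Suc k). \<not> bad b"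
    proof (intro ballI notI)
      fix b assume "b \<in> Mon n (Suc k)" "bad b"
      then have "sum_list b < D" "sum_list b = Suc k" using D by (auto simp: Mon_def)
      then show False using kD by simp
    qed
    have claim: "\<And>b c. b \<in> Mon n (Suc k) \<Longrightarrow> rk k b = m \<Longrightarrow> c \<in> M (Suc k) \<Longrightarrow>
                 (\<forall>g\<in>Mon n (Suc k). b < g \<longrightarrow> c g = \<zero>) \<Longrightarrow> ev R fs (Suc k) c \<in> IN k" for m
    proof (induction m rule: less_induct)
      case (less m)
      show ?case
      proof (rule reduce_step[OF nobad _ less.prems(1) less.prems(3) less.prems(4)])
        fix b' c' assume "b' \<in> Mon n (Suc k)" "rk k b' < rk k b" "c' \<in> M (Suc k)"
          "\<forall>g\<in>Mon n (Suc k). b' < g \<longrightarrow> c' g = \<zero>"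
        then show "ev R fs (Suc k) c' \<in> IN k" using less.IH less.prems(2) by blast
      qed
    qed
    show "N (Suc k) \<subseteq> IN k"
    proof
      fix y assume y: "y \<in> N (Suc k)"
      then have "y \<in> Ev (Suc k)" using N_sub pow_sub_Ev by blast
      then obtain c where c: "c \<in> UNIV \<rightarrow> carrier R" "ev R fs (Suc k) c = y" unfolding Ev_def by blast
      have cM: "c \<in> M (Suc k)" using c y by (simp add: M_def)
      have "ev R fs (Suc k) c \<in> IN k"
      proof (rule reduce_H[OF _ cM, of "Suc (card (Mon n (Suc k)))"])
        show "\<And>b c. b \<in> Mon n (Suc k) \<Longrightarrow> rk k b < Suc (card (Mon n (Suc k))) \<Longrightarrow> c \<in> M (Suc k) \<Longrightarrow>
                 (\<forall>g\<in>Mon n (Suc k). b < g \<longrightarrow> c g = \<zero>) \<Longrightarrow> ev R fs (Suc k) c \<in> IN k"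
          using claim by blast
        show "\<forall>g\<in>Mon n (Suc k). c g \<noteq> \<zero> \<longrightarrow> rk k g < Suc (card (Mon n (Suc k)))"
        proof (intro ballI impI)
          fix g assume "g \<in> Mon n (Suc k)"
          have "rk k g \<le> card (Mon n (Suc k))" unfolding rk_def
            by (rule card_mono[OF finite_Mon]) auto
          then show "rk k g < Suc (card (Mon n (Suc k)))" by simp
        qed
      qed
      then show "y \<in> IN k" using c by simp
    qed
  qed
qed

end

context cring
begin

lemma pow_ideal: "ideal I R \<Longrightarrow> ideal (ideal_pow R I k) R"
  by (induction k) (simp_all add: oneideal ideal_prod_is_ideal)

lemma colon_ideal: assumes J: "ideal J R" and K: "K \<subseteq> carrier R" shows "ideal (ideal_colon R J K) R"
proof -
  interpret J: ideal J R by fact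
  show ?thesis
  proof (rule ideal_by_closure)
    show "ideal_colon R J K \<subseteq> carrier R" unfolding ideal_colon_def by auto
    show "\<zero> \<in> ideal_colon R J K" unfolding ideal_colon_def using K by auto
    show "x \<oplus> y \<in> ideal_colon R J K" if "x \<in> ideal_colon R J K" "y \<in> ideal_colon R J K" for x y
      using that K unfolding ideal_colon_def by (auto simp: l_distr subset_iff)
    show "\<ominus> x \<in> ideal_colon R J K" if "x \<in> ideal_colon R J K" for x
      using that K unfolding ideal_colon_def by (auto simp: l_minus subset_iff)
    show "r \<otimes> x \<in> ideal_colon R J K" if "r \<in> carrier R" "x \<in> ideal_colon R J K" for r x
      using that K unfolding ideal_colon_def by (auto simp: m_assoc subset_iff J.I_l_closed)
  qed
qed

lemma pow_mem: assumes I: "ideal I R" and b: "b \<in> I" shows "b [^] k \<in> ideal_pow R I k"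
proof (induction k)
  case 0 then show ?case by simp
next
  case (Suc k)
  have bc: "b \<in> carrier R" using ideal.Icarr[OF I b] .
  have "b [^] Suc k = b \<otimes> b [^] k" using bc by (simp add: nat_pow_Suc m_comm)
  also have "\<dots> \<in> ideal_prod R I (ideal_pow R I k)" using b Suc.IH by (rule ideal_prod.prod)
  finally show ?case by simp
qed

end

lemma (in domain) pow_nonzero: "b \<in> carrier R \<Longrightarrow> b \<noteq> \<zero> \<Longrightarrow> b [^] (k::nat) \<noteq> \<zero>"
  by (induction k) (simp_all add: integral_iff)

context noetherian_domain
begin

lemma main:
  assumes I: "ideal I R" and Inz: "I \<noteq> {\<zero>}" and P: "P \<in> Ass_inf R I"
  shows "\<exists>k0. \<forall>k \<ge> k0. ideal_colon R (ideal_pow R I k) P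
             = ideal_prod R I (ideal_colon R (ideal_pow R I (k - 1)) P)"
proof -
  interpret I: ideal I R by fact
  obtain A where A: "A \<subseteq> carrier R" "finite A" "I = Idl A" using finetely_gen[OF I] by blast
  obtain fs where fs: "set fs = A" using finite_list[OF A(2)] by blast
  obtain k1 where k1: "P \<in> Ass R (ideal_pow R I k1)" using P unfolding Ass_inf_def by blast
  then obtain x where Pp: "primeideal P R" and x: "x \<in> carrier R" "P = ideal_colon R (ideal_pow R I k1) {x}"
    unfolding Ass_def by blast
  have Pc: "P \<subseteq> carrier R" using ideal.Icarr[OF primeideal.axioms(1)[OF Pp]] by blast
  obtain b where b: "b \<in> I" "b \<noteq> \<zero>" using Inz I.zero_closed by blast
  have bc: "b \<in> carrier R" using b I.Icarr by blast
  define a where "a = b [^] k1"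
  have ac: "a \<in> carrier R" unfolding a_def using bc by simp
  have anz: "a \<noteq> \<zero>" unfolding a_def using pow_nonzero[OF bc b(2)] .
  have aP: "a \<in> P"
  proof -
    have "a \<in> ideal_pow R I k1" unfolding a_def by (rule pow_mem[OF I b(1)])
    then show ?thesis unfolding x(2) ideal_colon_def using x(1) ideal.I_r_closed[OF pow_ideal[OF I]] ac by auto
  qed
  define Q where "Q k = ideal_colon R (ideal_pow R I k) P" for k
  have Qi: "ideal (Q k) R" for k unfolding Q_def by (rule colon_ideal[OF pow_ideal[OF I] Pc])
  have Qc: "Q k \<subseteq> carrier R" for k using ideal.Icarr[OF Qi] by blast
  have IQ: "ideal_prod R I (Q k) \<subseteq> Q (Suc k)" for k
  proof
    fix z assume "z \<in> ideal_prod R I (Q k)"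
    then show "z \<in> Q (Suc k)"
    proof (induction z rule: ideal_prod.induct)
      case (prod i y)
      have ic: "i \<in> carrier R" using prod I.Icarr by blast
      have yc: "y \<in> carrier R" using prod Qc by blast
      have "\<forall>p\<in>P. i \<otimes> y \<otimes> p \<in> ideal_pow R I (Suc k)"
      proof
        fix p assume p: "p \<in> P"
        have "y \<otimes> p \<in> ideal_pow R I k" using prod(2) p unfolding Q_def ideal_colon_def by blast
        then have "i \<otimes> (y \<otimes> p) \<in> ideal_prod R I (ideal_pow R I k)" using prod(1) by (rule ideal_prod.prod[rotated])
        then show "i \<otimes> y \<otimes> p \<in> ideal_pow R I (Suc k)" using ic yc p Pc by (simp add: m_assoc subset_iff)
      qed
      then show ?case unfolding Q_def ideal_colon_def using ic yc by auto
    next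
      case (sum s1 s2) then show ?case using Qi additive_subgroup.a_closed ideal.axioms(1) by metis
    qed
  qed
  define N where "N k = (\<lambda>y. a \<otimes> y) ` Q k" for k
  have NE: "w \<in> N k \<Longrightarrow> \<exists>y\<in>Q k. w = a \<otimes> y" for w k unfolding N_def by (erule imageE) (rule bexI)
  have NI: "y \<in> Q k \<Longrightarrow> a \<otimes> y \<in> N k" for y k unfolding N_def by (rule imageI)
  have Ni: "ideal (N k) R" for k
  proof (rule ideal_by_closure)
    interpret Qk: ideal "Q k" R by (rule Qi)
    show "N k \<subseteq> carrier R" unfolding N_def
    proof (rule image_subsetI)
      fix y assume "y \<in> Q k"
      then have "y \<in> carrier R" using Qc by blast
      then show "a \<otimes> y \<in> carrier R" using ac by simp
    qed
    have "\<zero> = a \<otimes> \<zero>" using ac by simp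
    then show "\<zero> \<in> N k" unfolding N_def by (rule image_eqI) (rule Qk.zero_closed)
    show "x \<oplus> y \<in> N k" if hx: "x \<in> N k" "y \<in> N k" for x y
    proof -
      obtain u where u: "u \<in> Q k" "x = a \<otimes> u" using NE[OF hx(1)] by blast
      obtain v where v: "v \<in> Q k" "y = a \<otimes> v" using NE[OF hx(2)] by blast
      note uv = u(1) v(1) u(2) v(2)
      have "u \<in> carrier R" "v \<in> carrier R" using uv Qc by blast+
      then have "x \<oplus> y = a \<otimes> (u \<oplus> v)" using uv ac by (simp add: r_distr)
      moreover have "u \<oplus> v \<in> Q k" by (rule Qk.a_closed[OF uv(1) uv(2)])
      ultimately show ?thesis unfolding N_def by (rule image_eqI)
    qed
    show "\<ominus> x \<in> N k" if hx: "x \<in> N k" for x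
    proof -
      obtain u where u: "u \<in> Q k" "x = a \<otimes> u" using NE[OF hx] by blast
      have "u \<in> carrier R" using u Qc by blast
      then have "\<ominus> x = a \<otimes> (\<ominus> u)" using u ac by (simp add: r_minus)
      moreover have "\<ominus> u \<in> Q k" by (rule Qk.a_inv_closed[OF u(1)])
      ultimately show ?thesis unfolding N_def by (rule image_eqI)
    qed
    show "r \<otimes> x \<in> N k" if hx: "r \<in> carrier R" "x \<in> N k" for r x
    proof -
      obtain u where u: "u \<in> Q k" "x = a \<otimes> u" using NE[OF hx(2)] by blast
      have "u \<in> carrier R" using u Qc by blast
      then have "r \<otimes> x = a \<otimes> (r \<otimes> u)" using u ac hx(1) by (simp add: m_lcomm)
      moreover have "r \<otimes> u \<in> Q k" by (rule Qk.I_l_closed[OF u(1) hx(1)])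
      ultimately show ?thesis unfolding N_def by (rule image_eqI)
    qed
  qed
  have IA: "Idl (set fs) = I" using A fs by simp
  have fsc: "set fs \<subseteq> carrier R" using A fs by simp
  have Nst: "ideal_prod R (Idl (set fs)) (N k) \<subseteq> N (Suc k)" for k
      unfolding IA
    proof
      fix z assume "z \<in> ideal_prod R I (N k)"
      then show "z \<in> N (Suc k)"
      proof (induction z rule: ideal_prod.induct)
        case (prod i w)
        obtain y where y: "y \<in> Q k" "w = a \<otimes> y" using NE[OF prod(2)] by blast
        have ic: "i \<in> carrier R" using prod I.Icarr by blast
        have "i \<otimes> y \<in> Q (Suc k)" using IQ ideal_prod.prod[OF prod(1) y(1)] by blast
        moreover have "i \<otimes> w = a \<otimes> (i \<otimes> y)" using y ic ac Qc by (auto simp: m_lcomm subset_iff)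
        ultimately show ?case using NI by simp
      next
        case (sum s1 s2) then show ?case using Ni additive_subgroup.a_closed ideal.axioms(1) by metis
      qed
    qed
  have Nsb: "N k \<subseteq> ideal_pow R (Idl (set fs)) k" for k
      unfolding IA
    proof
      fix w assume "w \<in> N k"
      then obtain y where y: "y \<in> Q k" "w = a \<otimes> y" using NE[of w k] by blast
      have "y \<otimes> a \<in> ideal_pow R I k" using y(1) aP unfolding Q_def ideal_colon_def by blast
      then show "w \<in> ideal_pow R I k" using y Qc ac by (auto simp: m_comm subset_iff)
    qed
  interpret rn: rees_noeth R fs N
    by (intro rees_noeth.intro rees.intro rees_axioms.intro gens_axioms.intro fsc gens.intro
        noetherian_ring_axioms is_cring Ni Nst Nsb)
  obtain k0 where k0: "\<forall>k\<ge>k0. N (Suc k) \<subseteq> ideal_prod R (Idl (set fs)) (N k)" using rn.key by blast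
  have NQ: "ideal_prod R I (N k) \<subseteq> (\<lambda>y. a \<otimes> y) ` ideal_prod R I (Q k)" for k
  proof
    fix z assume "z \<in> ideal_prod R I (N k)"
    then show "z \<in> (\<lambda>y. a \<otimes> y) ` ideal_prod R I (Q k)"
    proof (induction z rule: ideal_prod.induct)
      case (prod i w)
      obtain y where y: "y \<in> Q k" "w = a \<otimes> y" using NE[OF prod(2)] by blast
      have ic: "i \<in> carrier R" using prod I.Icarr by blast
      have "i \<otimes> w = a \<otimes> (i \<otimes> y)" using y ic ac Qc by (auto simp: m_lcomm subset_iff)
      moreover have "i \<otimes> y \<in> ideal_prod R I (Q k)" using prod(1) y(1) by (rule ideal_prod.prod)
      ultimately show ?case by (rule image_eqI)
    next
      case (sum s1 s2)
      obtain u where u: "s1 = a \<otimes> u" "u \<in> ideal_prod R I (Q k)" using sum.IH(1) by (rule imageE)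
      obtain v where v: "s2 = a \<otimes> v" "v \<in> ideal_prod R I (Q k)" using sum.IH(2) by (rule imageE)
      note uv = u(2) v(2) u(1) v(1)
      have "u \<in> carrier R" "v \<in> carrier R" using uv ideal_prod_in_carrier[OF I Qi] by blast+
      then have "s1 \<oplus> s2 = a \<otimes> (u \<oplus> v)" using uv ac by (simp add: r_distr)
      moreover have "u \<oplus> v \<in> ideal_prod R I (Q k)" using uv by (simp add: ideal_prod.sum)
      ultimately show ?case by (rule image_eqI)
    qed
  qed
  show ?thesis
  proof (intro exI[of _ "Suc k0"] allI impI)
    fix k assume kk: "Suc k0 \<le> k"
    then obtain k' where k': "k = Suc k'" "k0 \<le> k'" by (metis Suc_le_D Suc_le_mono)
    have "Q (Suc k') = ideal_prod R I (Q k')"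
    proof
      show "ideal_prod R I (Q k') \<subseteq> Q (Suc k')" by (rule IQ)
      show "Q (Suc k') \<subseteq> ideal_prod R I (Q k')"
      proof
        fix y assume y: "y \<in> Q (Suc k')"
        have "a \<otimes> y \<in> N (Suc k')" using NI[OF y] .
        then have "a \<otimes> y \<in> ideal_prod R I (N k')" using k0 k'(2) IA by blast
        then obtain z where z: "z \<in> ideal_prod R I (Q k')" "a \<otimes> y = a \<otimes> z" using NQ by blast
        have "y \<in> carrier R" "z \<in> carrier R" using y Qc z(1) ideal_prod_in_carrier[OF I Qi] by blast+
        then have "y = z" using z(2) m_lcancel[OF anz ac] by blast
        then show "y \<in> ideal_prod R I (Q k')" using z(1) by simp
      qed
    qed
    then show "ideal_colon R (ideal_pow R I k) P = ideal_prod R I (ideal_colon R (ideal_pow R I (k - 1)) P)"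
      using k'(1) unfolding Q_def by simp
  qed
qed

end

theorem corollary2p9:
  fixes R :: "('a, 'b) ring_scheme" and I P :: "'a set"
  assumes "noetherian_domain R"
    and "ideal I R"
    and "I \<noteq> {\<zero>\<^bsub>R\<^esub>}"
    and "P \<in> Ass_inf R I"
  shows "\<exists>k0. \<forall>k \<ge> k0.
           ideal_colon R (ideal_pow R I k) P
             = ideal_prod R I (ideal_colon R (ideal_pow R I (k - 1)) P)"
  using noetherian_domain.main[OF assms(1) assms(2-4)] .

end
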